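(* Let $\bar\eta>0$ be a constant such that $\eta^{(l)}_e(t)\le\bar\eta$ for all $e,t,l$ at every optimizer of the reformulated problem, and consider problem (P4') built with this $\bar\eta$. Then there exists a scalar $\bar\vartheta$ such that $|\vartheta^{(l)}_e(t)|\le\bar\vartheta$ for all $e\in\mathcal E$, $t\in\mathcal T$, $l\in\mathcal L$ (at every feasible point of (P4')).
   Context: Data: integers $n,T,N\ge1$, $\mathcal E=\{1,\dots,n\}$, $\mathcal T=\{0,\dots,T-1\}$, $\mathcal L=\{1,\dots,N\}$, $\mathcal O=\{1,\dots,m\}$; speed-limit values $0<\gamma^{(1)}<\dots<\gamma^{(m)}$; for each $e$: $h_e>0$, $\bar\rho_e>0$, $\bar f_e>0$, $\bar u_e>0$ with $\bar u_e\bar\rho_e>\bar f_e$, $\tau_e=\bar f_e/(\bar u_e\bar\rho_e-\bar f_e)$; constants $\bar\eta>0$, $\epsilon(\beta)>0$; sample data $\omega^{(l)}(t)\ge0$, $\rho^{(l)}_e(0)\ge0$, $\kappa^{(l)}_e(t)=\frac{1-r^{o,(l)}_{e-1}(t)}{1-r^{in,(l)}_e(t)}$ with $r^{o,(l)},r^{in,(l)}\in[0,1)$. Problem (P4'): maximize $-\lambda\epsilon(\beta)-\frac1N\sum_{e,t,l}\bar f_e\bar\rho_e\eta^{(l)}_e(t)+\frac1N\sum_{e,t,l}(\vartheta^{(l)}_e(t))^2$ over $x_{e,i}(t),y^{(l)}_{e,i}(t),z^{(l)}_{e,i}(t),\rho^{(l)}_e(t),\lambda,\mu^{(l)}_e(t),\nu^{(l)}_e(t),\eta^{(l)}_e(t),\vartheta^{(l)}_e(t)$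 subject to, for all $e,i,t,l$: $(\vartheta^{(l)}_e(t))^2\le\nu^{(l)}_e(t)\rho^{(l)}_e(t)$; $x_{e,i}(t)\in\{0,1\}$, $\sum_ix_{e,i}(t)=1$, $\gamma^{(1)}\le\sum_i\gamma^{(i)}x_{e,i}(t)\le\gamma^{(m)}$; $0\le z^{(l)}_{e,i}(t)\le\bar\eta x_{e,i}(t)$, $\eta^{(l)}_e(t)-\bar\eta(1-x_{e,i}(t))\le z^{(l)}_{e,i}(t)\le\eta^{(l)}_e(t)$, $0\le y^{(l)}_{e,i}(t)\le\bar\rho_ex_{e,i}(t)$, $\rho^{(l)}_e(t)-\bar\rho_e(1-x_{e,i}(t))\le y^{(l)}_{e,i}(t)\le\rho^{(l)}_e(t)$; $\rho^{(l)}_1(t+1)=\rho^{(l)}_1(t)+h_1\omega^{(l)}(t)-h_1\sum_i\gamma^{(i)}y^{(l)}_{1,i}(t)$; for $e\ge2$: $\rho^{(l)}_e(t+1)=\rho^{(l)}_e(t)+h_e\kappa^{(l)}_e(t)\sum_i\gamma^{(i)}y^{(l)}_{e-1,i}(t)-h_e\sum_i\gamma^{(i)}y^{(l)}_{e,i}(t)$ and $\kappa^{(l)}_e(t)\sum_i\gamma^{(i)}y^{(l)}_{e-1,i}(t)\le\min\{\bar f_e,\tau_e\bar u_e(\bar\rho_e-\rho^{(l)}_e(t))\}$; $\rho^{(l)}_e(0)$ equal to the sample data; $\sum_i\gamma^{(i)}(\bar\rho_e-\bar f_e/\bar u_e)z^{(l)}_{e,i}(t)-\mu^{(l)}_e(t)+\bar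 f_e\eta^{(l)}_e(t)\ge0$; $\nu^{(l)}_e(t)=\mu^{(l)}_e(t)+\frac1T\sum_i\gamma^{(i)}x_{e,i}(t)$; $\max_{e,t}|\nu^{(l)}_e(t)|\le\lambda$; $0\le\eta^{(l)}_e(t)\le\bar\eta$. *)

theory Defs
  imports Complex_Main
begin

text \<open>Index sets: links e in {1..n}, speed-limit options i in {1..m},
  time steps t in {0..<T}, samples l in {1..N}.\<close>

definition tau :: "(nat \<Rightarrow> real) \<Rightarrow> (nat \<Rightarrow> real) \<Rightarrow> (nat \<Rightarrow> real) \<Rightarrow> nat \<Rightarrow> real" where
  "tau rhobar fbar ubar e = fbar e / (ubar e * rhobar e - fbar e)"

definition kappa :: "(nat \<Rightarrow> nat \<Rightarrow> nat \<Rightarrow> real) \<Rightarrow> (nat \<Rightarrow> nat \<Rightarrow> nat \<Rightarrow> real)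
    \<Rightarrow> nat \<Rightarrow> nat \<Rightarrow> nat \<Rightarrow> real" where
  "kappa ro rin l e t = (1 - ro l (e - 1) t) / (1 - rin l e t)"

definition feasible_P4' ::
  "nat \<Rightarrow> nat \<Rightarrow> nat \<Rightarrow> nat \<Rightarrow> (nat \<Rightarrow> real) \<Rightarrow>
   (nat \<Rightarrow> real) \<Rightarrow> (nat \<Rightarrow> real) \<Rightarrow> (nat \<Rightarrow> real) \<Rightarrow> (nat \<Rightarrow> real) \<Rightarrow> real \<Rightarrow>
   (nat \<Rightarrow> nat \<Rightarrow> real) \<Rightarrow> (nat \<Rightarrow> nat \<Rightarrow> real) \<Rightarrow>
   (nat \<Rightarrow> nat \<Rightarrow> nat \<Rightarrow> real) \<Rightarrow> (nat \<Rightarrow> nat \<Rightarrow> nat \<Rightarrow> real) \<Rightarrow>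
   (nat \<Rightarrow> nat \<Rightarrow> nat \<Rightarrow> real) \<Rightarrow>
   (nat \<Rightarrow> nat \<Rightarrow> nat \<Rightarrow> nat \<Rightarrow> real) \<Rightarrow> (nat \<Rightarrow> nat \<Rightarrow> nat \<Rightarrow> nat \<Rightarrow> real) \<Rightarrow>
   (nat \<Rightarrow> nat \<Rightarrow> nat \<Rightarrow> real) \<Rightarrow> real \<Rightarrow>
   (nat \<Rightarrow> nat \<Rightarrow> nat \<Rightarrow> real) \<Rightarrow> (nat \<Rightarrow> nat \<Rightarrow> nat \<Rightarrow> real) \<Rightarrow>
   (nat \<Rightarrow> nat \<Rightarrow> nat \<Rightarrow> real) \<Rightarrow> (nat \<Rightarrow> nat \<Rightarrow> nat \<Rightarrow> real) \<Rightarrow> bool" where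
  "feasible_P4' n T N m gamma h rhobar fbar ubar etabar omega rho0 ro rin
     x y z rho lam mu nu eta theta \<longleftrightarrow>
   (\<forall>e\<in>{1..n}. \<forall>t\<in>{0..<T}.
      (\<forall>i\<in>{1..m}. x e i t \<in> {0, 1}) \<and>
      (\<Sum>i=1..m. x e i t) = 1 \<and>
      gamma 1 \<le> (\<Sum>i=1..m. gamma i * x e i t) \<and>
      (\<Sum>i=1..m. gamma i * x e i t) \<le> gamma m) \<and>
   (\<forall>l\<in>{1..N}. \<forall>e\<in>{1..n}. \<forall>t\<in>{0..<T}.
      (theta l e t)\<^sup>2 \<le> nu l e t * rho l e t \<and>
      (\<forall>i\<in>{1..m}.
         0 \<le> z l e i t \<and> z l e i t \<le> etabar * x e i t \<and>
         eta l e t - etabar * (1 - x e i t) \<le> z l e i t \<and> z l e i t \<le> eta l e t \<and>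
         0 \<le> y l e i t \<and> y l e i t \<le> rhobar e * x e i t \<and>
         rho l e t - rhobar e * (1 - x e i t) \<le> y l e i t \<and> y l e i t \<le> rho l e t) \<and>
      (e = 1 \<longrightarrow> rho l 1 (t + 1) = rho l 1 t + h 1 * omega l t
                    - h 1 * (\<Sum>i=1..m. gamma i * y l 1 i t)) \<and>
      (2 \<le> e \<longrightarrow>
         rho l e (t + 1) = rho l e t
           + h e * kappa ro rin l e t * (\<Sum>i=1..m. gamma i * y l (e - 1) i t)
           - h e * (\<Sum>i=1..m. gamma i * y l e i t) \<and>
         kappa ro rin l e t * (\<Sum>i=1..m. gamma i * y l (e - 1) i t)
           \<le> min (fbar e) (tau rhobar fbar ubar e * ubar e * (rhobar e - rho l e t))) \<and>
      (\<Sum>i=1..m. gamma i * (rhobar e - fbar e / ubar e) * z l e i t)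
           - mu l e t + fbar e * eta l e t \<ge> 0 \<and>
      nu l e t = mu l e t + (1 / real T) * (\<Sum>i=1..m. gamma i * x e i t) \<and>
      \<bar>nu l e t\<bar> \<le> lam \<and>
      0 \<le> eta l e t \<and> eta l e t \<le> etabar) \<and>
   (\<forall>l\<in>{1..N}. \<forall>e\<in>{1..n}. rho l e 0 = rho0 l e)"

end

theory Submission
  imports Defs
begin

theorem lemma5:
  fixes n T N m :: nat
    and gamma h rhobar fbar ubar :: "nat \<Rightarrow> real"
    and etabar :: real
    and omega rho0 :: "nat \<Rightarrow> nat \<Rightarrow> real"
    and ro rin :: "nat \<Rightarrow> nat \<Rightarrow> nat \<Rightarrow> real"
  assumes "n \<ge> 1" and "T \<ge> 1" and "N \<ge> 1" and "m \<ge> 1"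
    and "0 < gamma 1"
    and "\<And>i j. i \<in> {1..m} \<Longrightarrow> j \<in> {1..m} \<Longrightarrow> i < j \<Longrightarrow> gamma i < gamma j"
    and "\<And>e. e \<in> {1..n} \<Longrightarrow> h e > 0 \<and> rhobar e > 0 \<and> fbar e > 0 \<and> ubar e > 0
            \<and> ubar e * rhobar e > fbar e"
    and "etabar > 0"
    and "\<And>l t. l \<in> {1..N} \<Longrightarrow> t \<in> {0..<T} \<Longrightarrow> omega l t \<ge> 0"
    and "\<And>l e. l \<in> {1..N} \<Longrightarrow> e \<in> {1..n} \<Longrightarrow> rho0 l e \<ge> 0"
    and "\<And>l e t. 0 \<le> ro l e t \<and> ro l e t < 1"
    and "\<And>l e t. 0 \<le> rin l e t \<and> rin l e t < 1"
  shows "\<exists>thetabar :: real. \<forall>x y z rho lam mu nu eta theta.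
           feasible_P4' n T N m gamma h rhobar fbar ubar etabar omega rho0 ro rin
             x y z rho lam mu nu eta theta \<longrightarrow>
           (\<forall>e\<in>{1..n}. \<forall>t\<in>{0..<T}. \<forall>l\<in>{1..N}. \<bar>theta l e t\<bar> \<le> thetabar)"
proof -
  define U where "U e = (\<Sum>i=1..m. \<bar>gamma i\<bar> * \<bar>rhobar e - fbar e / ubar e\<bar> * etabar)
      + \<bar>fbar e\<bar> * etabar + \<bar>gamma m\<bar>" for e
  define K where "K = (\<Sum>e=1..n. \<bar>U e * rhobar e\<bar>)"
  show ?thesis
  proof (rule exI[of _ "1 + K"], intro allI impI ballI)
    fix x y z rho lam mu nu eta theta e t l
    assume F: "feasible_P4' n T N m gamma h rhobar fbar ubar etabar omega rho0 ro rin
             x y z rho lam mu nu eta theta"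
      and e: "e \<in> {1..n}" and t: "t \<in> {0..<T}" and l: "l \<in> {1..N}"
    have X: "\<forall>i\<in>{1..m}. x e i t \<in> {0, 1}" "(\<Sum>i=1..m. x e i t) = 1"
      "(\<Sum>i=1..m. gamma i * x e i t) \<le> gamma m"
      using F e t unfolding feasible_P4'_def by auto
    from F have A: "\<forall>l\<in>{1..N}. \<forall>e\<in>{1..n}. \<forall>t\<in>{0..<T}.
      (theta l e t)\<^sup>2 \<le> nu l e t * rho l e t \<and>
      (\<forall>i\<in>{1..m}.
         0 \<le> z l e i t \<and> z l e i t \<le> etabar * x e i t \<and>
         eta l e t - etabar * (1 - x e i t) \<le> z l e i t \<and> z l e i t \<le> eta l e t \<and>
         0 \<le> y l e i t \<and> y l e i t \<le> rhobar e * x e i t \<and>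
         rho l e t - rhobar e * (1 - x e i t) \<le> y l e i t \<and> y l e i t \<le> rho l e t) \<and>
      (e = 1 \<longrightarrow> rho l 1 (t + 1) = rho l 1 t + h 1 * omega l t
                    - h 1 * (\<Sum>i=1..m. gamma i * y l 1 i t)) \<and>
      (2 \<le> e \<longrightarrow>
         rho l e (t + 1) = rho l e t
           + h e * kappa ro rin l e t * (\<Sum>i=1..m. gamma i * y l (e - 1) i t)
           - h e * (\<Sum>i=1..m. gamma i * y l e i t) \<and>
         kappa ro rin l e t * (\<Sum>i=1..m. gamma i * y l (e - 1) i t)
           \<le> min (fbar e) (tau rhobar fbar ubar e * ubar e * (rhobar e - rho l e t))) \<and>
      (\<Sum>i=1..m. gamma i * (rhobar e - fbar e / ubar e) * z l e i t)
           - mu l e t + fbar e * eta l e t \<ge> 0 \<and>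
      nu l e t = mu l e t + (1 / real T) * (\<Sum>i=1..m. gamma i * x e i t) \<and>
      \<bar>nu l e t\<bar> \<le> lam \<and>
      0 \<le> eta l e t \<and> eta l e t \<le> etabar"
        unfolding feasible_P4'_def by (elim conjE)
    have L: "(theta l e t)\<^sup>2 \<le> nu l e t * rho l e t"
      "\<forall>i\<in>{1..m}.
         0 \<le> z l e i t \<and> z l e i t \<le> etabar * x e i t \<and>
         0 \<le> y l e i t \<and> y l e i t \<le> rhobar e * x e i t \<and>
         rho l e t - rhobar e * (1 - x e i t) \<le> y l e i t \<and> y l e i t \<le> rho l e t"
      "(\<Sum>i=1..m. gamma i * (rhobar e - fbar e / ubar e) * z l e i t)
           - mu l e t + fbar e * eta l e t \<ge> 0"
      "nu l e t = mu l e t + (1 / real T) * (\<Sum>i=1..m. gamma i * x e i t)"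
      "0 \<le> eta l e t" "eta l e t \<le> etabar"
      using A l e t by blast+
    have rb: "rhobar e > 0" using assms(7)[OF e] by auto
    obtain i where i: "i \<in> {1..m}" "x e i t = 1"
    proof (rule ccontr)
      assume "\<not> thesis"
      with that have "\<forall>i\<in>{1..m}. x e i t = 0" using X(1) by fastforce
      then have "(\<Sum>i=1..m. x e i t) = 0" by simp
      with X(2) show False by simp
    qed
    have rho: "0 \<le> rho l e t" "rho l e t \<le> rhobar e"
      using L(2) i by force+
    have s1: "(\<Sum>i=1..m. gamma i * (rhobar e - fbar e / ubar e) * z l e i t)
       \<le> (\<Sum>i=1..m. \<bar>gamma i\<bar> * \<bar>rhobar e - fbar e / ubar e\<bar> * etabar)"
    proof (rule sum_mono)
      fix j assume j: "j \<in> {1..m}"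
      have z: "0 \<le> z l e j t" "z l e j t \<le> etabar"
        using L(2) j X(1) assms(8) by force+
      have "gamma j * (rhobar e - fbar e / ubar e) * z l e j t
          \<le> \<bar>gamma j * (rhobar e - fbar e / ubar e) * z l e j t\<bar>" by simp
      also have "\<dots> = \<bar>gamma j\<bar> * \<bar>rhobar e - fbar e / ubar e\<bar> * z l e j t"
        using z by (simp add: abs_mult)
      also have "\<dots> \<le> \<bar>gamma j\<bar> * \<bar>rhobar e - fbar e / ubar e\<bar> * etabar"
        using z by (intro mult_left_mono) auto
      finally show "gamma j * (rhobar e - fbar e / ubar e) * z l e j t
          \<le> \<bar>gamma j\<bar> * \<bar>rhobar e - fbar e / ubar e\<bar> * etabar" .
    qed
    have s2: "fbar e * eta l e t \<le> \<bar>fbar e\<bar> * etabar"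
      using L(5,6) by (metis abs_ge_self abs_mult abs_of_nonneg mult_mono' abs_ge_zero order_trans)
    have T1: "real T \<ge> 1" using assms(2) by simp
    have s3: "(1 / real T) * (\<Sum>i=1..m. gamma i * x e i t) \<le> \<bar>gamma m\<bar>"
    proof (cases "(\<Sum>i=1..m. gamma i * x e i t) \<ge> 0")
      case True
      have "(1 / real T) * (\<Sum>i=1..m. gamma i * x e i t) \<le> 1 * (\<Sum>i=1..m. gamma i * x e i t)"
        using True T1 by (intro mult_right_mono) auto
      then show ?thesis using X(3) by simp
    next
      case False
      then have "(1 / real T) * (\<Sum>i=1..m. gamma i * x e i t) \<le> 0"
        using T1 by (intro mult_nonneg_nonpos) auto
      then show ?thesis by simp
    qed
    have nu: "nu l e t \<le> U e" using s1 s2 s3 L(3,4) unfolding U_def by linarith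
    have U0: "U e \<ge> 0" unfolding U_def using assms(8) by (intro add_nonneg_nonneg sum_nonneg) auto
    have "nu l e t * rho l e t \<le> U e * rhobar e"
    proof (cases "nu l e t \<ge> 0")
      case True then show ?thesis using nu rho by (intro mult_mono) auto
    next
      case False
      then have "nu l e t * rho l e t \<le> 0" using rho by (simp add: mult_nonpos_nonneg)
      also have "0 \<le> U e * rhobar e" using U0 rb by simp
      finally show ?thesis .
    qed
    also have "\<dots> \<le> \<bar>U e * rhobar e\<bar>" by simp
    also have "\<dots> \<le> K" unfolding K_def
      by (rule member_le_sum) (use e in auto)
    finally have th: "(theta l e t)\<^sup>2 \<le> K" using L(1) by linarith
    have "\<bar>theta l e t\<bar> \<le> 1 + (theta l e t)\<^sup>2"
    proof (cases "\<bar>theta l e t\<bar> \<le> 1")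
      case True then show ?thesis by (simp add: add_increasing2)
    next
      case False
      then have "\<bar>theta l e t\<bar> * 1 \<le> \<bar>theta l e t\<bar> * \<bar>theta l e t\<bar>"
        by (intro mult_left_mono) auto
      then show ?thesis by (simp add: power2_eq_square abs_mult_self_eq)
    qed
    then show "\<bar>theta l e t\<bar> \<le> 1 + K" using th by linarith
  qed
qed

end
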